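(* Let $k\ge 2$ and $n\ge 1$ be integers and $x=\zeta_k$. Let $S=\mathrm{circ}(s_0,\dots,s_{k-1})\in\mathrm{BH}(k,k)$ be a circulant matrix, and for $0\le m\le k-1$ let $\lambda_m=\sum_{j=0}^{k-1}s_jx^{mj}$ be its eigenvalues. Suppose $H\in\mathrm{BH}(kn+k,k)$ has the block form \[H=\begin{pmatrix} S & F_k\otimes j_n\\ F_k^{\ast}\otimes j_n^{\top} & A\end{pmatrix},\] where $A=[A_{ij}]_{0\le i,j\le k-1}$ is a $kn\times kn$ matrix partitioned into $n\times n$ blocks $A_{ij}$. Then (1) for $i\neq j$, the entries of every row and of every column of $A_{ij}$ sum to $0$; (2) for each $0\le m\le k-1$, the entries of every row and of every column of $A_{mm}$ sum to $-\overline{\lambda_m}$.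
   Context: $\zeta_k=e^{2\pi\sqrt{-1}/k}$. A complex Hadamard matrix of order $N$ is an $N\times N$ matrix $H$ with all entries of modulus $1$ and $HH^{\ast}=NI_N$, where $^{\ast}$ is conjugate transpose. $\mathrm{BH}(N,k)$ denotes the set of $N\times N$ complex Hadamard matrices with all entries $k$-th roots of unity. $\mathrm{circ}(s_0,\dots,s_{k-1})$ is the $k\times k$ matrix whose $(i,j)$ entry ($0\le i,j\le k-1$) is $s_{(j-i)\bmod k}$, i.e. first row $(s_0,\dots,s_{k-1})$ and each subsequent row the cyclic shift one place to the right of the previous. $F_k=[x^{(i-1)(j-1)}]_{1\le i,j\le k}$ is the Fourier matrix, $j_n$ is the all-ones row vector of length $n$, $j_n^\top$ its transpose, and $\otimes$ is the Kronecker product $A\otimes B=[a_{ij}B]$. *)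

theory Defs
  imports Complex_Main
begin

text \<open>Matrices of varying size are represented as functions nat => nat => complex,
  only the entries with indices below the size being relevant (0-based indices).\<close>

definition zeta :: "nat \<Rightarrow> complex" where
  "zeta k = exp (2 * of_real pi * \<i> / of_nat k)"

definition is_BH :: "nat \<Rightarrow> nat \<Rightarrow> (nat \<Rightarrow> nat \<Rightarrow> complex) \<Rightarrow> bool" where
  "is_BH N k H \<longleftrightarrow>
     (\<forall>i<N. \<forall>j<N. H i j ^ k = 1) \<and>
     (\<forall>i<N. \<forall>j<N. (\<Sum>l<N. H i l * cnj (H j l)) = (if i = j then of_nat N else 0))"

definition circ :: "nat \<Rightarrow> (nat \<Rightarrow> complex) \<Rightarrow> nat \<Rightarrow> nat \<Rightarrow> complex" where
  "circ k s i j = s ((j + k - i) mod k)"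

definition fourier :: "nat \<Rightarrow> nat \<Rightarrow> nat \<Rightarrow> complex" where
  "fourier k i j = zeta k ^ (i * j)"

text \<open>F_k (x) j_n : a k x kn matrix, (i, j*n + c) entry equals F_k(i,j).\<close>
definition fourier_kron_ones :: "nat \<Rightarrow> nat \<Rightarrow> nat \<Rightarrow> nat \<Rightarrow> complex" where
  "fourier_kron_ones k n i c = fourier k i (c div n)"

text \<open>F_k^* (x) j_n^T : a kn x k matrix, (i*n + r, j) entry equals F_k^*(i,j) = cnj (F_k(j,i)).\<close>
definition fourier_adj_kron_ones_t :: "nat \<Rightarrow> nat \<Rightarrow> nat \<Rightarrow> nat \<Rightarrow> complex" where
  "fourier_adj_kron_ones_t k n r j = cnj (fourier k j (r div n))"

definition block_H :: "nat \<Rightarrow> nat \<Rightarrow> (nat \<Rightarrow> nat \<Rightarrow> complex) \<Rightarrow> (nat \<Rightarrow> nat \<Rightarrow> complex)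
    \<Rightarrow> nat \<Rightarrow> nat \<Rightarrow> complex" where
  "block_H k n S A i j =
     (if i < k then (if j < k then S i j else fourier_kron_ones k n i (j - k))
      else (if j < k then fourier_adj_kron_ones_t k n (i - k) j else A (i - k) (j - k)))"

end

theory Submission imports Defs "HOL-Analysis.Complex_Transcendental" "Jordan_Normal_Form.Determinant" begin

lemma sum_split_add: fixes f :: "nat \<Rightarrow> 'a::comm_monoid_add" shows "(\<Sum>l<k+m. f l) = (\<Sum>l<k. f l) + (\<Sum>l<m. f (k+l))"
  by (induct m) (auto simp: add_ac)

lemma sum_split_mult: fixes f :: "nat \<Rightarrow> 'a::comm_monoid_add" shows "(\<Sum>l<k*n. f l) = (\<Sum>i<k. \<Sum>r<n. f (i*n+r))"
proof (induct k)
  case (Suc k)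
  have "(\<Sum>l<Suc k*n. f l) = (\<Sum>l<k*n + n. f l)" by (simp add: add.commute)
  also have "\<dots> = (\<Sum>l<k*n. f l) + (\<Sum>l<n. f (k*n+l))" by (rule sum_split_add)
  finally show ?case using Suc by simp
qed simp

lemma zeta_pow: "zeta k ^ d = exp(2 * of_real pi * \<i> * of_nat d / of_nat k)"
  unfolding zeta_def by (simp add: exp_of_nat_mult[symmetric] algebra_simps)

lemma zeta_pow_eq_1: "k \<ge> 1 \<Longrightarrow> zeta k ^ d = 1 \<longleftrightarrow> k dvd d"
  using complex_root_unity_eq_1 zeta_pow by metis

lemma zeta_norm: "norm (zeta k) = 1"
  unfolding zeta_def by (simp add: norm_exp_eq_Re)

lemma zeta_pow_cnj: "zeta k ^ d * cnj (zeta k ^ d) = 1"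
  by (metis complex_norm_square norm_power zeta_norm power_one of_real_1)

lemma zeta_k: "k \<ge> 1 \<Longrightarrow> zeta k ^ k = 1"
  by (simp add: zeta_pow_eq_1)

lemma zeta_ne0: "zeta k ^ d \<noteq> 0"
  by (metis norm_power zeta_norm power_one norm_zero zero_neq_one)

lemma zeta_inj:
  assumes "k \<ge> 1" "i < k" "j < k" "zeta k ^ i = zeta k ^ j" shows "i = j"
proof (rule ccontr)
  assume ne: "i \<noteq> j"
  have "\<And>a b. a < k \<Longrightarrow> b < k \<Longrightarrow> a < b \<Longrightarrow> zeta k ^ a = zeta k ^ b \<Longrightarrow> False"
  proof -
    fix a b assume ab: "a < k" "b < k" "a < b" "zeta k ^ a = zeta k ^ b"
    have "zeta k ^ b = zeta k ^ (a + (b - a))" using ab by simp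
    also have "\<dots> = zeta k ^ a * zeta k ^ (b - a)" by (rule power_add)
    finally have "zeta k ^ b = zeta k ^ a * zeta k ^ (b - a)" .
    then have "zeta k ^ a * 1 = zeta k ^ a * zeta k ^ (b - a)" using ab(4) by simp
    then have "zeta k ^ (b - a) = 1" by (metis mult_left_cancel zeta_ne0)
    then have "k dvd (b - a)" using zeta_pow_eq_1 assms(1) by blast
    moreover have "b - a > 0" using ab by simp
    ultimately have "k \<le> b - a" by (rule dvd_imp_le)
    then show False using ab by simp
  qed
  then show False using assms ne by (metis linorder_neqE_nat)
qed

lemma fourier_orth:
  assumes "k \<ge> 1" "i < k" "j < k"
  shows "(\<Sum>a<k. zeta k ^ (a*i) * cnj (zeta k ^ (a*j))) = (if i = j then of_nat k else 0)"
proof (cases "i = j")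
  case True
  have "\<And>a. zeta k ^ (a*j) * cnj (zeta k ^ (a*j)) = 1" by (rule zeta_pow_cnj)
  then show ?thesis using True by (simp only: if_True) simp
next
  case False
  define w where "w = zeta k ^ i * cnj (zeta k ^ j)"
  have eq: "zeta k ^ (a*i) * cnj (zeta k ^ (a*j)) = w ^ a" for a
  proof -
    have 1: "zeta k ^ (a*i) = (zeta k ^ i) ^ a" by (metis power_mult mult.commute)
    have 2: "cnj (zeta k ^ (a*j)) = cnj (zeta k ^ j) ^ a" by (metis power_mult mult.commute complex_cnj_power)
    show ?thesis unfolding 1 2 w_def by (rule power_mult_distrib[symmetric])
  qed
  have w1: "(zeta k ^ i) ^ k = 1" by (metis power_mult mult.commute zeta_k[OF assms(1)] power_one)
  have w2: "(cnj (zeta k ^ j)) ^ k = 1"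
    by (metis complex_cnj_power complex_cnj_one power_mult mult.commute zeta_k[OF assms(1)] power_one)
  have wk: "w ^ k = 1" by (simp only: w_def power_mult_distrib w1 w2 mult_1_right)
  have "w \<noteq> 1"
  proof
    assume w: "w = 1"
    have "zeta k ^ i = zeta k ^ i * (zeta k ^ j * cnj (zeta k ^ j))" by (simp only: zeta_pow_cnj mult_1_right)
    also have "\<dots> = w * zeta k ^ j" by (simp only: w_def mult_ac)
    also have "\<dots> = zeta k ^ j" using w by (simp only: mult_1_left)
    finally show False using zeta_inj assms False by blast
  qed
  have "(\<Sum>a<k. zeta k ^ (a*i) * cnj (zeta k ^ (a*j))) = (\<Sum>a<k. w ^ a)" by (simp only: eq)
  also have "\<dots> = 0" using \<open>w \<noteq> 1\<close> wk by (simp add: geometric_sum)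
  finally show ?thesis using False by simp
qed

lemma fourier_inv:
  assumes k: "k \<ge> 1" and i: "i < k" and j: "j < k"
    and h: "\<forall>a<k. (\<Sum>l<k. zeta k ^ (a*l) * y l) = zeta k ^ (a*i) * \<mu>"
  shows "y j = (if i = j then \<mu> else 0)"
proof -
  let ?x = "zeta k"
  have "(\<Sum>a<k. cnj(?x^(a*j)) * (\<Sum>l<k. ?x^(a*l) * y l))
      = (\<Sum>a<k. \<Sum>l<k. cnj(?x^(a*j)) * (?x^(a*l) * y l))"
    by (simp add: sum_distrib_left del: complex_cnj_power)
  also have "\<dots> = (\<Sum>l<k. \<Sum>a<k. cnj(?x^(a*j)) * (?x^(a*l) * y l))" by (rule sum.swap)
  also have "\<dots> = (\<Sum>l<k. y l * (\<Sum>a<k. ?x^(a*l) * cnj(?x^(a*j))))"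
    by (simp add: sum_distrib_left mult_ac del: complex_cnj_power)
  also have "\<dots> = (\<Sum>l<k. y l * (if l = j then of_nat k else 0))"
    by (intro sum.cong refl) (simp add: fourier_orth k j del: complex_cnj_power)
  also have "\<dots> = y j * of_nat k" using j by (simp add: if_distrib cong: if_cong)
  finally have L: "(\<Sum>a<k. cnj(?x^(a*j)) * (\<Sum>l<k. ?x^(a*l) * y l)) = y j * of_nat k" .
  have "(\<Sum>a<k. cnj(?x^(a*j)) * (\<Sum>l<k. ?x^(a*l) * y l)) = (\<Sum>a<k. cnj(?x^(a*j)) * (?x^(a*i) * \<mu>))"
    using h by (intro sum.cong refl) simp
  also have "\<dots> = \<mu> * (\<Sum>a<k. ?x^(a*i) * cnj(?x^(a*j)))"
    by (simp add: sum_distrib_left mult_ac del: complex_cnj_power)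
  also have "\<dots> = \<mu> * (if i = j then of_nat k else 0)"
    using fourier_orth[OF k i j] by (simp del: complex_cnj_power)
  finally have "y j * of_nat k = \<mu> * (if i = j then of_nat k else 0)" using L by simp
  then show ?thesis using k by (auto split: if_splits)
qed

lemma BH_cols:
  assumes H: "is_BH N k H" and i: "i < N" and j: "j < N"
  shows "(\<Sum>l<N. cnj (H l i) * H l j) = (if i = j then of_nat N else 0)"
proof -
  have N: "N > 0" using i by simp
  define M where "M = mat N N (\<lambda>(i,j). H i j)"
  define M' where "M' = mat N N (\<lambda>(i,j). cnj (H j i) / of_nat N)"
  have MC: "M \<in> carrier_mat N N" "M' \<in> carrier_mat N N" by (auto simp: M_def M'_def)
  have "M * M' = 1\<^sub>m N"
  proof (rule eq_matI)
    fix a b assume ab: "a < dim_row (1\<^sub>m N :: complex mat)" "b < dim_col (1\<^sub>m N :: complex mat)"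
    then have ab': "a < N" "b < N" by auto
    have "(M * M') $$ (a, b) = (\<Sum>l<N. H a l * cnj (H b l)) / of_nat N"
      using ab' by (simp add: M_def M'_def scalar_prod_def atLeast0LessThan sum_divide_distrib)
    also have "\<dots> = 1\<^sub>m N $$ (a, b)" using H ab' N unfolding is_BH_def by simp
    finally show "(M * M') $$ (a, b) = 1\<^sub>m N $$ (a, b)" .
  qed (auto simp: M_def M'_def)
  then have "M' * M = 1\<^sub>m N" using mat_mult_left_right_inverse MC by blast
  then have "(M' * M) $$ (i, j) = 1\<^sub>m N $$ (i, j)" by simp
  then have "(\<Sum>l<N. cnj (H l i) * H l j) / of_nat N = (if i = j then 1 else 0)"
    using i j by (simp add: M_def M'_def scalar_prod_def atLeast0LessThan sum_divide_distrib)
  then show ?thesis using N by (auto split: if_splits simp: divide_eq_eq)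
qed

lemma mod_helper: "(l::nat) < k \<Longrightarrow> a < k \<Longrightarrow> (l + k - a) mod k = (if a \<le> l then l - a else l + k - a)"
proof (cases "a \<le> l")
  case True
  assume "l < k" "a < k"
  then have "l + k - a = (l - a) + k" using True by linarith
  then have "(l + k - a) mod k = (l - a) mod k" by simp
  then show ?thesis using True \<open>l < k\<close> by simp
qed simp

lemma zeta_shift: "k \<ge> 1 \<Longrightarrow> zeta k ^ ((m + k) * i) = zeta k ^ (m * i)"
  by (simp add: add_mult_distrib power_add power_mult zeta_k)

lemma zeta_div: "zeta k ^ p * zeta k ^ q = zeta k ^ r \<Longrightarrow> zeta k ^ p = zeta k ^ r * cnj (zeta k ^ q)"
proof -
  assume h: "zeta k ^ p * zeta k ^ q = zeta k ^ r"
  have "zeta k ^ p = zeta k ^ p * (zeta k ^ q * cnj (zeta k ^ q))" by (simp only: zeta_pow_cnj) simp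
  also have "\<dots> = zeta k ^ r * cnj (zeta k ^ q)" by (simp only: mult.assoc[symmetric] h)
  finally show ?thesis .
qed

lemma circ1:
  assumes k: "k \<ge> 1" and a: "a < k"
  shows "(\<Sum>l<k. s ((l + k - a) mod k) * zeta k ^ (l*i)) = zeta k ^ (a*i) * (\<Sum>t<k. s t * zeta k ^ (t*i))"
proof -
  have "(\<Sum>t<k. s t * (zeta k ^ (a*i) * zeta k ^ (t*i))) = (\<Sum>l<k. s ((l + k - a) mod k) * zeta k ^ (l*i))"
  proof (rule sum.reindex_bij_witness[where j="\<lambda>t. if t+a<k then t+a else t+a-k" and i="\<lambda>l. (l+k-a) mod k"])
    fix t assume t: "t \<in> {..<k}"
    show "((if t+a<k then t+a else t+a-k) + k - a) mod k = t" using t a by (auto simp: mod_helper)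
    show "(if t+a<k then t+a else t+a-k) \<in> {..<k}" using t a by auto
    have e: "zeta k ^ ((t+a)*i) = zeta k ^ (a*i) * zeta k ^ (t*i)" by (metis add.commute add_mult_distrib power_add)
    show "s (((if t+a<k then t+a else t+a-k) + k - a) mod k) * zeta k ^ ((if t+a<k then t+a else t+a-k) * i)
          = s t * (zeta k ^ (a*i) * zeta k ^ (t*i))"
    proof (cases "t + a < k")
      case True then show ?thesis using t a e by (simp add: mod_helper)
    next
      case False
      then have "t + a = (t + a - k) + k" by simp
      then have "zeta k ^ ((t+a-k) * i) = zeta k ^ ((t+a)*i)" using zeta_shift[OF k, of "t+a-k" i] by metis
      then show ?thesis using t a False e by (simp add: mod_helper)
    qed
  next
    fix l assume l: "l \<in> {..<k}"
    show "(l + k - a) mod k \<in> {..<k}" using k by simp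
    show "(if (l + k - a) mod k + a < k then (l + k - a) mod k + a else (l + k - a) mod k + a - k) = l"
      using l a by (auto simp: mod_helper)
  qed
  then show ?thesis by (simp add: sum_distrib_left mult_ac)
qed

lemma circ2:
  assumes k: "k \<ge> 1" and a: "a < k"
  shows "(\<Sum>l<k. cnj (s ((a + k - l) mod k)) * zeta k ^ (l*j)) = zeta k ^ (a*j) * cnj (\<Sum>t<k. s t * zeta k ^ (t*j))"
proof -
  have "(\<Sum>t<k. cnj (s t) * (zeta k ^ (a*j) * cnj (zeta k ^ (t*j)))) = (\<Sum>l<k. cnj (s ((a + k - l) mod k)) * zeta k ^ (l*j))"
  proof (rule sum.reindex_bij_witness[where j="\<lambda>t. (a+k-t) mod k" and i="\<lambda>l. (a+k-l) mod k"])
    fix t assume t: "t \<in> {..<k}"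
    show "(a + k - (a + k - t) mod k) mod k = t" using t a by (auto simp: mod_helper)
    show "(a+k-t) mod k \<in> {..<k}" using k by simp
    have "zeta k ^ (((a+k-t) mod k) * j) * zeta k ^ (t * j) = zeta k ^ (a * j)"
    proof (cases "t \<le> a")
      case True then show ?thesis using t a by (simp add: mod_helper power_add[symmetric] add_mult_distrib[symmetric])
    next
      case False
      then have "zeta k ^ (((a+k-t) mod k) * j) * zeta k ^ (t * j) = zeta k ^ ((a + k) * j)"
        using t a by (simp add: mod_helper power_add[symmetric] add_mult_distrib[symmetric])
      then show ?thesis using zeta_shift[OF k] by simp
    qed
    then have "zeta k ^ (((a+k-t) mod k) * j) = zeta k ^ (a * j) * cnj (zeta k ^ (t * j))" by (rule zeta_div)
    then show "cnj (s ((a + k - (a + k - t) mod k) mod k)) * zeta k ^ ((a + k - t) mod k * j) =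
          cnj (s t) * (zeta k ^ (a * j) * cnj (zeta k ^ (t * j)))"
      using t a by (auto simp: mod_helper simp del: complex_cnj_power)
  next
    fix l assume l: "l \<in> {..<k}"
    show "(a + k - l) mod k \<in> {..<k}" using k by simp
    show "(a + k - (a + k - l) mod k) mod k = l" using l a by (auto simp: mod_helper)
  qed
  then show ?thesis by (simp add: sum_distrib_left mult_ac del: complex_cnj_power)
qed

lemma sum_N: fixes f :: "nat \<Rightarrow> 'a::comm_monoid_add"
  shows "(\<Sum>l<k*n+k. f l) = (\<Sum>l<k. f l) + (\<Sum>j<k. \<Sum>c<n. f (k + (j*n+c)))"
proof -
  have "(\<Sum>l<k*n+k. f l) = (\<Sum>l<k+k*n. f l)" by (simp add: add.commute)
  also have "\<dots> = (\<Sum>l<k. f l) + (\<Sum>m<k*n. f (k+m))" by (rule sum_split_add)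
  also have "(\<Sum>m<k*n. f (k+m)) = (\<Sum>j<k. \<Sum>c<n. f (k + (j*n+c)))" by (rule sum_split_mult)
  finally show ?thesis .
qed

theorem theorem5p3:
  fixes k n :: nat and s :: "nat \<Rightarrow> complex" and A :: "nat \<Rightarrow> nat \<Rightarrow> complex"
  assumes "k \<ge> 2" and "n \<ge> 1"
    and "is_BH k k (circ k s)"
    and "is_BH (k * n + k) k (block_H k n (circ k s) A)"
  shows "(\<forall>i<k. \<forall>j<k. i \<noteq> j \<longrightarrow>
            (\<forall>r<n. (\<Sum>c<n. A (i * n + r) (j * n + c)) = 0) \<and>
            (\<forall>c<n. (\<Sum>r<n. A (i * n + r) (j * n + c)) = 0)) \<and>
         (\<forall>m<k. let lam = (\<Sum>j<k. s j * zeta k ^ (m * j)) in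
            (\<forall>r<n. (\<Sum>c<n. A (m * n + r) (m * n + c)) = - cnj lam) \<and>
            (\<forall>c<n. (\<Sum>r<n. A (m * n + r) (m * n + c)) = - cnj lam))"
proof -
  define H where "H = block_H k n (circ k s) A"
  define x where "x = zeta k"
  define lam where "lam m = (\<Sum>t<k. s t * x ^ (t * m))" for m
  have lam_eq: "(\<Sum>j<k. s j * zeta k ^ (m * j)) = lam m" for m
    by (simp add: lam_def x_def mult.commute)
  have k1: "k \<ge> 1" and n0: "n > 0" using assms by auto
  have BH: "is_BH (k*n+k) k H" using assms H_def by simp
  have dv: "(j*n + c) div n = j" if "c < n" for j c using that n0 by simp
  have E1: "H a l = s ((l + k - a) mod k)" if "a < k" "l < k" for a l
    using that by (simp add: H_def block_H_def circ_def)
  have E2: "H a (k + (j*n+c)) = x ^ (a*j)" if "a < k" "c < n" for a j c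
    using that by (simp add: H_def block_H_def fourier_kron_ones_def fourier_def dv x_def)
  have E3: "H (k + (i*n+r)) l = cnj (x ^ (l*i))" if "l < k" "r < n" for i r l
    using that by (simp add: H_def block_H_def fourier_adj_kron_ones_t_def fourier_def dv x_def del: complex_cnj_power)
  have E4: "H (k + (i*n+r)) (k + (j*n+c)) = A (i*n+r) (j*n+c)" for i r j c
    by (simp add: H_def block_H_def)
  have idx: "k + (i*n+r) < k*n+k" if "i < k" "r < n" for i r
  proof -
    have "i*n + r < i*n + n" using that by simp
    also have "\<dots> = (i+1)*n" by simp
    also have "\<dots> \<le> k*n" using that by (intro mult_right_mono) auto
    finally show ?thesis by simp
  qed
  have ROW: "(\<Sum>c<n. A (i*n+r) (j*n+c)) = (if i = j then - cnj (lam i) else 0)"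
    if i: "i < k" and j: "j < k" and r: "r < n" for i j r
  proof -
    define R where "R j' = (\<Sum>c<n. A (i*n+r) (j'*n+c))" for j'
    have "\<forall>a<k. (\<Sum>l<k. x^(a*l) * cnj (R l)) = x^(a*i) * (- lam i)"
    proof (intro allI impI)
      fix a assume a: "a < k"
      have "(\<Sum>l<k*n+k. H a l * cnj (H (k + (i*n+r)) l)) = 0"
        using BH a idx[OF i r] unfolding is_BH_def by auto
      then have "(\<Sum>l<k. H a l * cnj (H (k + (i*n+r)) l))
          + (\<Sum>j<k. \<Sum>c<n. H a (k + (j*n+c)) * cnj (H (k + (i*n+r)) (k + (j*n+c))))= 0"
        by (simp only: sum_N)
      moreover have "(\<Sum>l<k. H a l * cnj (H (k + (i*n+r)) l)) = (\<Sum>l<k. s ((l + k - a) mod k) * x ^ (l*i))"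
        using a r by (intro sum.cong refl) (simp add: E1 E3 del: complex_cnj_power)
      moreover have "\<dots> = x^(a*i) * lam i" unfolding x_def lam_def by (rule circ1[OF k1 a])
      moreover have "(\<Sum>j<k. \<Sum>c<n. H a (k + (j*n+c)) * cnj (H (k + (i*n+r)) (k + (j*n+c))))
          = (\<Sum>l<k. x^(a*l) * cnj (R l))"
        using a by (intro sum.cong refl) (simp add: E2 E4 R_def sum_distrib_left del: complex_cnj_power)
      ultimately show "(\<Sum>l<k. x^(a*l) * cnj (R l)) = x^(a*i) * (- lam i)"
        by (simp add: algebra_simps add_eq_0_iff del: complex_cnj_power)
    qed
    then have "cnj (R j) = (if i = j then - lam i else 0)"
      using fourier_inv[OF k1 i j, of "\<lambda>l. cnj (R l)"] unfolding x_def by simp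
    then have "R j = (if i = j then - cnj (lam i) else 0)"
      by (metis complex_cnj_cnj complex_cnj_minus complex_cnj_zero)
    then show ?thesis by (simp add: R_def)
  qed
  have COL: "(\<Sum>r<n. A (i*n+r) (j*n+c)) = (if j = i then - cnj (lam j) else 0)"
    if i: "i < k" and j: "j < k" and c: "c < n" for i j c
  proof -
    define C where "C i' = (\<Sum>r<n. A (i'*n+r) (j*n+c))" for i'
    have "\<forall>a<k. (\<Sum>l<k. x^(a*l) * C l) = x^(a*j) * (- cnj (lam j))"
    proof (intro allI impI)
      fix a assume a: "a < k"
      have "(\<Sum>l<k*n+k. cnj (H l a) * H l (k + (j*n+c))) = 0"
        using BH_cols[OF BH, of a "k + (j*n+c)"] a idx[OF j c] by auto
      then have "(\<Sum>l<k. cnj (H l a) * H l (k + (j*n+c)))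
          + (\<Sum>i<k. \<Sum>r<n. cnj (H (k + (i*n+r)) a) * H (k + (i*n+r)) (k + (j*n+c)))= 0"
        by (simp only: sum_N)
      moreover have "(\<Sum>l<k. cnj (H l a) * H l (k + (j*n+c))) = (\<Sum>l<k. cnj (s ((a + k - l) mod k)) * x ^ (l*j))"
        using a c by (intro sum.cong refl) (simp add: E1 E2 del: complex_cnj_power)
      moreover have "\<dots> = x^(a*j) * cnj (lam j)" unfolding x_def lam_def by (rule circ2[OF k1 a])
      moreover have "(\<Sum>i<k. \<Sum>r<n. cnj (H (k + (i*n+r)) a) * H (k + (i*n+r)) (k + (j*n+c)))
          = (\<Sum>l<k. x^(a*l) * C l)"
        using a by (intro sum.cong refl) (simp add: E3 E4 C_def sum_distrib_left del: complex_cnj_power)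
      ultimately show "(\<Sum>l<k. x^(a*l) * C l) = x^(a*j) * (- cnj (lam j))"
        by (simp add: algebra_simps add_eq_0_iff del: complex_cnj_power)
    qed
    then have "C i = (if j = i then - cnj (lam j) else 0)"
      using fourier_inv[OF k1 j i, of C] unfolding x_def by simp
    then show ?thesis by (simp add: C_def)
  qed
  show ?thesis
    unfolding Let_def lam_eq using ROW COL by auto
qed

end
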